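(* If $u=v_1\,0\,v_2\,0\cdots0\,v_r$, where $v_1,\dots,v_r$ are arbitrary (possibly empty) words over $\{1,0,\bar1\}$, then \[ [u]=[v_10]\,[0v_20]\cdots[0v_{r-1}0]\,[0v_r]. \]
   Context: Words are finite sequences over the alphabet $\{1,0,\bar1\}$ (where $\bar1=-1$). Let $a,b,c,d,e$ be indeterminates. For every word $u$ a Laurent polynomial $[u]$ in $a,b,c,d,e$ is defined by the recursions, valid for all (possibly empty) words $v,w$: $[v01w]=[v0w]/a$, $[v\bar11w]=([v\bar1w]+[v1w])/b$, $[v\bar10w]=[v0w]/c$, $[v\bar1]=[v]/d$, $[1v]=[v]/e$, together with $[u]=1$ whenever $u$ consists only of $0$'s (including the empty word). These rules determine $[u]$ uniquely for every word. *)

theory Defs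
  imports Main
begin

text \<open>Letters of the alphabet: P = 1, Z = 0, N = bar 1 = -1.\<close>
datatype letter = P | Z | N

type_synonym word = "letter list"

text \<open>The defining recursions for the bracket, with the indeterminates
  a,b,c,d,e interpreted as (nonzero) elements of an arbitrary field.\<close>
definition bracket_rules ::
  "'k::field \<Rightarrow> 'k \<Rightarrow> 'k \<Rightarrow> 'k \<Rightarrow> 'k \<Rightarrow> (word \<Rightarrow> 'k) \<Rightarrow> bool" where
  "bracket_rules a b c d e f \<longleftrightarrow>
     (\<forall>v w. f (v @ [Z, P] @ w) = f (v @ [Z] @ w) / a) \<and>
     (\<forall>v w. f (v @ [N, P] @ w) = (f (v @ [N] @ w) + f (v @ [P] @ w)) / b) \<and>
     (\<forall>v w. f (v @ [N, Z] @ w) = f (v @ [Z] @ w) / c) \<and>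
     (\<forall>v. f (v @ [N]) = f v / d) \<and>
     (\<forall>v. f (P # v) = f v / e) \<and>
     (\<forall>u. set u \<subseteq> {Z} \<longrightarrow> f u = 1)"

definition bracket :: "'k::field \<Rightarrow> 'k \<Rightarrow> 'k \<Rightarrow> 'k \<Rightarrow> 'k \<Rightarrow> word \<Rightarrow> 'k" where
  "bracket a b c d e = (THE f. bracket_rules a b c d e f)"

fun join0 :: "word list \<Rightarrow> word" where
  "join0 [] = []"
| "join0 [v] = v"
| "join0 (v # vs) = v @ [Z] @ join0 vs"

end

theory Submission
  imports Defs
begin

context fixes a b c d e :: "'k::field"
begin

fun val :: "bool \<Rightarrow> nat \<Rightarrow> word \<Rightarrow> 'k" where
  "val t j [] = inverse d ^ j"
| "val t j (Z#w) = inverse c ^ j * val False 0 w"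
| "val t j (N#w) = val t (Suc j) w"
| "val t 0 (P#w) = inverse (if t then e else a) * val t 0 w"
| "val t (Suc m) (P#w) = (\<Sum>k\<le>m. val t (Suc m - k) w * inverse b ^ Suc k)
      + val t 0 w * inverse (if t then e else a) * inverse b ^ Suc m"

lemma val_lin:
  assumes "\<And>t j. val t j X = k1 * val t j Y + k2 * val t j W"
  shows "val t j (v@X) = k1 * val t j (v@Y) + k2 * val t j (v@W)"
proof (induction v arbitrary: t j)
  case Nil then show ?case using assms by simp
next
  case (Cons l v)
  show ?case
  proof (cases l)
    case P
    then show ?thesis
    proof (cases j)
      case 0 then show ?thesis using P Cons by (simp add: algebra_simps)
    next
      case (Suc m)
      then show ?thesis using P Cons
        by (simp add: sum.distrib sum_distrib_left algebra_simps)
    qed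
  next
    case Z then show ?thesis using Cons by (simp add: algebra_simps)
  next
    case N then show ?thesis using Cons by (simp add: algebra_simps)
  qed
qed

lemma val_zeros: "set u \<subseteq> {Z} \<Longrightarrow> val t 0 u = 1"
  by (induction u arbitrary: t) auto

lemma val_ZP: "val t j (Z#P#w) = inverse a * val t j (Z#w) + 0 * val t j (Z#w)"
  by simp

lemma val_NZ: "val t j (N#Z#w) = inverse c * val t j (Z#w) + 0 * val t j (Z#w)"
  by simp

lemma val_N: "val t j [N] = inverse d * val t j [] + 0 * val t j []"
  by simp

lemma val_NP: "val t j (N#P#w) = inverse b * val t j (N#w) + inverse b * val t j (P#w)"
proof (cases j)
  case 0 then show ?thesis by (simp add: algebra_simps)
next
  case (Suc m)
  have "(\<Sum>k\<le>Suc m. val t (Suc (Suc m) - k) w * inverse b ^ Suc k)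
     = val t (Suc (Suc m)) w * inverse b + (\<Sum>k\<le>m. val t (Suc m - k) w * inverse b ^ Suc (Suc k))"
    by (subst sum.atMost_Suc_shift) simp
  then show ?thesis using Suc by (simp add: sum_distrib_left algebra_simps)
qed

lemma val_Zsplit: "val t j (v @ Z # w) = val False 0 w * val t j (v @ [Z]) + 0 * val t j (v@[Z])"
  by (rule val_lin) simp

lemma rules_val: "bracket_rules a b c d e (val True 0)"
  unfolding bracket_rules_def
proof (intro conjI allI impI)
  fix v w
  show "val True 0 (v @ [Z, P] @ w) = val True 0 (v @ [Z] @ w) / a"
    using val_lin[of "Z#P#w" "inverse a" "Z#w" 0 "Z#w", OF val_ZP] by (simp add: field_simps)
  show "val True 0 (v @ [N, P] @ w) = (val True 0 (v @ [N] @ w) + val True 0 (v @ [P] @ w)) / b"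
    using val_lin[of "N#P#w" "inverse b" "N#w" "inverse b" "P#w", OF val_NP] by (simp add: divide_inverse distrib_left mult.commute)
  show "val True 0 (v @ [N, Z] @ w) = val True 0 (v @ [Z] @ w) / c"
    using val_lin[of "N#Z#w" "inverse c" "Z#w" 0 "Z#w", OF val_NZ] by (simp add: field_simps)
next
  fix v
  show "val True 0 (v @ [N]) = val True 0 v / d"
    using val_lin[of "[N]" "inverse d" "[]" 0 "[]", OF val_N] by (simp add: field_simps)
  show "val True 0 (P # v) = val True 0 v / e" by (simp add: field_simps)
next
  fix u :: word assume "set u \<subseteq> {Z}" then show "val True 0 u = 1" by (rule val_zeros)
qed

end

lemma word_cases:
  "set u \<subseteq> {Z} \<or> (\<exists>v. u = P # v) \<or> (\<exists>v. u = v @ [N])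
   \<or> (\<exists>v w. u = v @ [Z,P] @ w) \<or> (\<exists>v w. u = v @ [N,P] @ w) \<or> (\<exists>v w. u = v @ [N,Z] @ w)"
proof (induction u)
  case Nil then show ?case by simp
next
  case (Cons x u)
  from Cons.IH show ?case
  proof (elim disjE exE)
    assume h: "set u \<subseteq> {Z}"
    show ?thesis
    proof (cases x)
      case N
      show ?thesis
      proof (cases u)
        case Nil then show ?thesis using N by (metis append_Nil)
      next
        case (Cons y u') then have "y = Z" using h by auto
        then show ?thesis using N Cons by (metis append_Cons append_Nil)
      qed
    qed (use h in auto)
  next
    fix v assume "u = P # v"
    then show ?thesis by (cases x) (metis append_Cons append_Nil)+
  next
    fix v assume "u = v @ [N]" then show ?thesis by (metis append_Cons)
  next
    fix v w assume "u = v @ [Z,P] @ w" then show ?thesis by (metis append_Cons)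
  next
    fix v w assume "u = v @ [N,P] @ w" then show ?thesis by (metis append_Cons)
  next
    fix v w assume "u = v @ [N,Z] @ w" then show ?thesis by (metis append_Cons)
  qed
qed

lemma rules_unique:
  assumes "bracket_rules a b c d e f" "bracket_rules a b c d e g"
  shows "f u = g u"
proof (induction u rule: length_induct)
  case (1 u)
  note R = assms[unfolded bracket_rules_def]
  from word_cases[of u] show ?case
  proof (elim disjE exE)
    assume "set u \<subseteq> {Z}" then show ?thesis using R by auto
  next
    fix v assume u: "u = P # v"
    then have "f v = g v" using 1 by auto
    then show ?thesis using R u by auto
  next
    fix v assume u: "u = v @ [N]"
    then have "f v = g v" using 1 by auto
    then show ?thesis using R u by auto
  next
    fix v w assume u: "u = v @ [Z,P] @ w"
    then have "f (v @ [Z] @ w) = g (v @ [Z] @ w)" using 1 by auto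
    then show ?thesis using R u by auto
  next
    fix v w assume u: "u = v @ [N,P] @ w"
    then have "f (v @ [N] @ w) = g (v @ [N] @ w)" "f (v @ [P] @ w) = g (v @ [P] @ w)" using 1 by auto
    then show ?thesis using R u by auto
  next
    fix v w assume u: "u = v @ [N,Z] @ w"
    then have "f (v @ [Z] @ w) = g (v @ [Z] @ w)" using 1 by auto
    then show ?thesis using R u by auto
  qed
qed

lemma bracket_val: "bracket a b c d e = val a b c d e True 0"
  unfolding bracket_def
proof (rule the_equality)
  show "bracket_rules a b c d e (val a b c d e True 0)" by (rule rules_val)
  fix f assume "bracket_rules a b c d e f"
  then show "f = val a b c d e True 0" by (intro ext rules_unique[OF _ rules_val])
qed

lemma join_prod:
  "vs \<noteq> [] \<Longrightarrow> val a b c d e t 0 (join0 vs) =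
    (\<Prod>i<length vs. val a b c d e (if i = 0 then t else False) 0
        (vs ! i @ (if i = length vs - 1 then [] else [Z])))"
proof (induction vs arbitrary: t rule: join0.induct)
  case 1 then show ?case by simp
next
  case (2 v) then show ?case by simp
next
  case (3 v v' vs)
  have "val a b c d e t 0 (join0 (v # v' # vs)) =
        val a b c d e False 0 (join0 (v' # vs)) * val a b c d e t 0 (v @ [Z])"
    using val_Zsplit[of a b c d e t 0 v "join0 (v'#vs)"] by simp
  also have "val a b c d e False 0 (join0 (v' # vs)) =
    (\<Prod>i<length (v'#vs). val a b c d e False 0
        ((v'#vs) ! i @ (if i = length (v'#vs) - 1 then [] else [Z])))"
    using 3 by simp
  finally show ?case
    by (simp only: length_Cons prod.lessThan_Suc_shift) (simp add: mult.commute)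
qed

theorem proposition4:
  fixes a b c d e :: "'k::field" and vs :: "word list"
  assumes "a \<noteq> 0" "b \<noteq> 0" "c \<noteq> 0" "d \<noteq> 0" "e \<noteq> 0"
    and "1 \<le> length vs"
  shows "bracket a b c d e (join0 vs) =
    (\<Prod>i<length vs. bracket a b c d e
        ((if i = 0 then [] else [Z]) @ vs ! i @ (if i = length vs - 1 then [] else [Z])))"
proof -
  have ne: "vs \<noteq> []" using assms(6) by auto
  show ?thesis unfolding bracket_val join_prod[OF ne]
    by (rule prod.cong) auto
qed

end
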